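(* Let $a,b,c$ be positive numbers with $a<b<c$ and $b-a<c_0<a$, where $c_0=c-\lfloor c/b\rfloor b$. Then: (i) $R_{a,b,c}\mathcal D_{a,b,c}=\tilde R_{a,b,c}\mathcal D_{a,b,c}=\mathcal D_{a,b,c}$ and $R_{a,b,c}\mathcal S_{a,b,c}=\tilde R_{a,b,c}\mathcal S_{a,b,c}=\mathcal S_{a,b,c}$; (ii) $R_{a,b,c}(\tilde R_{a,b,c}(t))=\tilde R_{a,b,c}(R_{a,b,c}(t))=t$ for all $t\in\mathcal S_{a,b,c}$ (in particular for all $t\in\mathcal D_{a,b,c}$); (iii) $|R_{a,b,c}(E)|=|\tilde R_{a,b,c}(E)|=|E|$ for every Lebesgue measurable set $E\subset\mathcal S_{a,b,c}$ (in particular for every measurable $E\subset\mathcal D_{a,b,c}$), where $|\cdot|$ is Lebesgue measure.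
   Context: For $a,b,c>0$ and $t\in\mathbb R$, $\mathbf M_{a,b,c}(t)=(\chi_{[0,c)}(t-\mu+\lambda))_{\mu\in a\mathbb Z,\lambda\in b\mathbb Z}$ is the infinite matrix with rows indexed by $a\mathbb Z$ and columns by $b\mathbb Z$, acting by $(\mathbf M_{a,b,c}(t)\mathbf x)(\mu)=\sum_{\lambda\in b\mathbb Z}\chi_{[0,c)}(t-\mu+\lambda)\mathbf x(\lambda)$. $\mathcal B_b$ is the set of vectors $(\mathbf x(\lambda))_{\lambda\in b\mathbb Z}$ with entries in $\{0,1\}$, and $\mathcal B_b^0=\{\mathbf x\in\mathcal B_b:\mathbf x(0)=1\}$. $\mathbf 1,\mathbf 2$ denote the vectors indexed by $a\mathbb Z$ with all entries $1$, resp. $2$. $\mathcal D_{a,b,c}=\{t:\mathbf M_{a,b,c}(t)\mathbf x=\mathbf 2\text{ for some }\mathbf x\in\mathcal B_b^0\}$, $\mathcal S_{a,b,c}=\{t:\mathbf M_{a,b,c}(t)\mathbf x=\mathbf 1\text{ for some }\mathbf x\in\mathcal B_b^0\}$. With $c_0=c-\lfloor c/b\rfloor b$ and $b-a<c_0<a$, the piecewise linear maps $R_{a,b,c},\tilde R_{a,b,c}:\mathbb R\to\mathbb R$ are: $R_{a,b,c}(t)=t+\lfloor c/b\rfloor b+b$ if $t\in[0,c_0+a-b)+a\mathbb Z$, $R_{a,b,c}(t)=t$ if $t\in[c_0+a-b,c_0)+a\mathbb Z$, $R_{a,b,c}(t)=t+\lfloor c/b\rfloor b$ if $t\in[c_0,a)+a\mathbb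 Z$; $\tilde R_{a,b,c}(t)=t-\lfloor c/b\rfloor b$ if $t\in[c-a,c-c_0)+a\mathbb Z$, $\tilde R_{a,b,c}(t)=t$ if $t\in[c-c_0,c-c_0+b-a)+a\mathbb Z$, $\tilde R_{a,b,c}(t)=t-\lfloor c/b\rfloor b-b$ if $t\in[c-c_0+b-a,c)+a\mathbb Z$. Here $A+a\mathbb Z=\{x+ak:x\in A,k\in\mathbb Z\}$. *)

theory Defs
  imports "HOL-Analysis.Analysis"
begin

text \<open>Indices: the row \<mu> = a*j (j::int) of a\<int>, the column \<lambda> = b*l (l::int) of b\<int>.
  A vector indexed by b\<int> is a function int \<Rightarrow> real (x l = x(b l)).\<close>

definition Mact :: "real \<Rightarrow> real \<Rightarrow> real \<Rightarrow> real \<Rightarrow> (int \<Rightarrow> real) \<Rightarrow> int \<Rightarrow> real" where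
  "Mact a b c t x j = (\<Sum>\<^sub>\<infinity> l\<in>(UNIV::int set). indicator {0..<c} (t - a * of_int j + b * of_int l) * x l)"

definition Bvec :: "(int \<Rightarrow> real) set" where
  "Bvec = {x. \<forall>l. x l \<in> {0, 1}}"

definition Bvec0 :: "(int \<Rightarrow> real) set" where
  "Bvec0 = {x \<in> Bvec. x 0 = 1}"

definition Dset :: "real \<Rightarrow> real \<Rightarrow> real \<Rightarrow> real set" where
  "Dset a b c = {t. \<exists>x\<in>Bvec0. \<forall>j. Mact a b c t x j = 2}"

definition Sset :: "real \<Rightarrow> real \<Rightarrow> real \<Rightarrow> real set" where
  "Sset a b c = {t. \<exists>x\<in>Bvec0. \<forall>j. Mact a b c t x j = 1}"

definition c0 :: "real \<Rightarrow> real \<Rightarrow> real" where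
  "c0 b c = c - of_int \<lfloor>c / b\<rfloor> * b"

definition per :: "real \<Rightarrow> real set \<Rightarrow> real set" where
  "per a A = {x + a * of_int k | x k. x \<in> A}"

text \<open>Under b - a < c0 < a the three periodised intervals partition \<real>; the last
  case is taken as the remaining branch.\<close>
definition Rmap :: "real \<Rightarrow> real \<Rightarrow> real \<Rightarrow> real \<Rightarrow> real" where
  "Rmap a b c t =
    (if t \<in> per a {0..<c0 b c + a - b} then t + of_int \<lfloor>c / b\<rfloor> * b + b
     else if t \<in> per a {c0 b c + a - b..<c0 b c} then t
     else t + of_int \<lfloor>c / b\<rfloor> * b)"

definition Rtmap :: "real \<Rightarrow> real \<Rightarrow> real \<Rightarrow> real \<Rightarrow> real" where
  "Rtmap a b c t =
    (if t \<in> per a {c - a..<c - c0 b c} then t - of_int \<lfloor>c / b\<rfloor> * b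
     else if t \<in> per a {c - c0 b c..<c - c0 b c + b - a} then t
     else t - of_int \<lfloor>c / b\<rfloor> * b - b)"

end

theory Submission imports Defs begin


definition rr :: "real \<Rightarrow> real \<Rightarrow> real \<Rightarrow> real" where
  "rr a s u = u - a * of_int \<lfloor>(u - s) / a\<rfloor>"

lemma rr_range: assumes "0 < a" shows "s \<le> rr a s u \<and> rr a s u < s + a"
proof -
  let ?q = "(u - s) / a"
  have q: "a * ?q = u - s" using assms by simp
  have "of_int \<lfloor>?q\<rfloor> \<le> ?q" "?q < of_int \<lfloor>?q\<rfloor> + 1" by linarith+
  then have "a * of_int \<lfloor>?q\<rfloor> \<le> a * ?q" "a * ?q < a * (of_int \<lfloor>?q\<rfloor> + 1)"
    using assms by (intro mult_left_mono mult_strict_left_mono; simp)+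
  then have "a * of_int \<lfloor>?q\<rfloor> \<le> u - s" "u - s < a * of_int \<lfloor>?q\<rfloor> + a"
    unfolding q by (simp_all add: algebra_simps)
  thus ?thesis unfolding rr_def by linarith
qed

lemma rr_eq: assumes "0 < a" "s \<le> v" "v < s + a"
  shows "rr a s (v + a * of_int k) = v"
proof -
  have e: "(v + a * of_int k - s) / a = (v - s) / a + of_int k" using assms by (simp add: field_simps)
  have "0 \<le> (v - s) / a" "(v - s) / a < 1" using assms by (simp_all add: field_simps)
  then have "\<lfloor>(v - s) / a\<rfloor> = 0" by (simp add: floor_eq_iff)
  then have "\<lfloor>(v + a * of_int k - s) / a\<rfloor> = k" unfolding e by simp
  thus ?thesis unfolding rr_def by simp
qed

lemma rr_decomp: "u = rr a s u + a * of_int \<lfloor>(u - s) / a\<rfloor>"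
  unfolding rr_def by simp

lemma per_iff: assumes "0 < a" "s \<le> \<alpha>" "\<beta> \<le> s + a"
  shows "u \<in> per a {\<alpha>..<\<beta>} \<longleftrightarrow> \<alpha> \<le> rr a s u \<and> rr a s u < \<beta>"
proof
  assume "u \<in> per a {\<alpha>..<\<beta>}"
  then obtain x k where u: "u = x + a * of_int k" and x: "\<alpha> \<le> x" "x < \<beta>"
    unfolding per_def by auto
  have "rr a s u = x" unfolding u using assms x by (intro rr_eq) auto
  thus "\<alpha> \<le> rr a s u \<and> rr a s u < \<beta>" using x by simp
next
  assume "\<alpha> \<le> rr a s u \<and> rr a s u < \<beta>"
  then have "u = rr a s u + a * of_int \<lfloor>(u - s) / a\<rfloor> \<and> rr a s u \<in> {\<alpha>..<\<beta>}"
    using rr_decomp[of u a s] by simp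
  thus "u \<in> per a {\<alpha>..<\<beta>}" unfolding per_def by blast
qed

definition Fs :: "real \<Rightarrow> (int \<Rightarrow> real) \<Rightarrow> real \<Rightarrow> real \<Rightarrow> real" where
  "Fs b x u v = sum x {l::int. u \<le> b * of_int l \<and> b * of_int l < v}"

lemma Fs_fin: fixes u v :: real assumes "0 < b" shows "finite {l::int. u \<le> b * of_int l \<and> b * of_int l < v}"
proof (rule finite_subset[of _ "{\<lceil>u / b\<rceil> .. \<lfloor>v / b\<rfloor>}"])
  show "{l::int. u \<le> b * of_int l \<and> b * of_int l < v} \<subseteq> {\<lceil>u / b\<rceil> .. \<lfloor>v / b\<rfloor>}"
  proof
    fix l assume "l \<in> {l::int. u \<le> b * of_int l \<and> b * of_int l < v}"
    then have "u / b \<le> of_int l" "of_int l \<le> v / b" using assms by (auto simp: field_simps)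
    then show "l \<in> {\<lceil>u / b\<rceil> .. \<lfloor>v / b\<rfloor>}" by (simp add: ceiling_le le_floor_iff)
  qed
qed simp

lemma Mact_Fs: assumes "0 < b"
  shows "Mact a b c t x j = Fs b x (a * of_int j - t) (a * of_int j - t + c)"
proof -
  let ?T = "{l::int. a * of_int j - t \<le> b * of_int l \<and> b * of_int l < a * of_int j - t + c}"
  have "Mact a b c t x j = (\<Sum>\<^sub>\<infinity> l\<in>?T. x l)"
    unfolding Mact_def by (rule infsum_cong_neutral) (auto simp: indicator_def)
  also have "\<dots> = Fs b x (a * of_int j - t) (a * of_int j - t + c)"
    unfolding Fs_def using Fs_fin[OF assms] by simp
  finally show ?thesis .
qed

lemma Fs_split: assumes "0 < b" "u \<le> v" "v \<le> w"
  shows "Fs b x u w = Fs b x u v + Fs b x v w"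
proof -
  have "{l::int. u \<le> b * of_int l \<and> b * of_int l < w} =
     {l::int. u \<le> b * of_int l \<and> b * of_int l < v} \<union> {l::int. v \<le> b * of_int l \<and> b * of_int l < w}"
    using assms by auto
  thus ?thesis unfolding Fs_def
    by (simp add: sum.union_disjoint Fs_fin[OF assms(1)] disjoint_iff)
qed

lemma int_gap: fixes b :: real assumes "0 < b" "l \<noteq> (l0::int)" shows "b \<le> \<bar>b * of_int l - b * of_int l0\<bar>"
proof (cases "l < l0")
  case True
  then have "of_int l + 1 \<le> (of_int l0::real)" by linarith
  then have "b * (of_int l + 1) \<le> b * of_int l0" using assms by (intro mult_left_mono) auto
  thus ?thesis by (simp add: algebra_simps)
next
  case False
  then have "of_int l0 + 1 \<le> (of_int l::real)" using assms by linarith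
  then have "b * (of_int l0 + 1) \<le> b * of_int l" using assms by (intro mult_left_mono) auto
  thus ?thesis by (simp add: algebra_simps)
qed

lemma Fs_single: assumes "0 < b" "v - u \<le> b" "u \<le> b * of_int l0" "b * of_int l0 < v"
  shows "Fs b x u v = x l0"
proof -
  have "{l::int. u \<le> b * of_int l \<and> b * of_int l < v} = {l0}"
  proof safe
    fix l assume "u \<le> b * of_int l" "b * of_int l < v"
    show "l = l0"
    proof (rule ccontr)
      assume "l \<noteq> l0"
      from int_gap[OF assms(1) this] show False using assms \<open>u \<le> b * of_int l\<close> \<open>b * of_int l < v\<close> by linarith
    qed
  qed (use assms in auto)
  thus ?thesis unfolding Fs_def by simp
qed

lemma Fs_empty: assumes "\<And>l. \<not> (u \<le> b * of_int l \<and> b * of_int l < v)"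
  shows "Fs b x u v = 0"
proof -
  have "{l::int. u \<le> b * of_int l \<and> b * of_int l < v} = {}" using assms by auto
  thus ?thesis unfolding Fs_def by (metis sum.empty)
qed

lemma Mact_shift: "Mact a b c (t + of_int k * b) (\<lambda>l. x (l + k)) j = Mact a b c t x j"
proof -
  let ?g = "\<lambda>l. indicator {0..<c} (t - a * of_int j + b * of_int l) * x l"
  have "(\<lambda>l. indicator {0..<c} (t + of_int k * b - a * of_int j + b * of_int l) * x (l + k)) = (\<lambda>l. ?g (l + k))"
    by (auto simp: algebra_simps)
  moreover have "bij_betw (\<lambda>l::int. l + k) UNIV UNIV"
    by (rule bij_betwI[of _ _ _ "\<lambda>l. l - k"]) auto
  ultimately show ?thesis unfolding Mact_def
    using infsum_reindex_bij_betw[of "\<lambda>l::int. l + k" UNIV UNIV ?g] by simp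
qed

lemma emeasure_transl: "emeasure lebesgue ((\<lambda>x. p + x) ` S) = emeasure lebesgue (S::real set)"
  using emeasure_lebesgue_affine[of 1 p S] by (simp add: add.commute)

lemma trans_pieces:
  fixes f :: "real \<Rightarrow> real"
  assumes E: "E \<in> sets lebesgue" and A: "A \<in> sets lebesgue" and B: "B \<in> sets lebesgue"
    and sub: "E \<subseteq> A \<union> B" and dis: "A \<inter> B = {}"
    and fA: "\<And>x. x \<in> E \<inter> A \<Longrightarrow> f x = p + x" and fB: "\<And>x. x \<in> E \<inter> B \<Longrightarrow> f x = q + x"
    and inj: "inj_on f E"
  shows "f ` E \<in> sets lebesgue \<and> emeasure lebesgue (f ` E) = emeasure lebesgue E"
proof -
  have EA: "E \<inter> A \<in> sets lebesgue" and EB: "E \<inter> B \<in> sets lebesgue" using E A B by auto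
  have i1: "f ` (E \<inter> A) = (\<lambda>x. p + x) ` (E \<inter> A)" using fA by (rule image_cong[OF refl])
  have i2: "f ` (E \<inter> B) = (\<lambda>x. q + x) ` (E \<inter> B)" using fB by (rule image_cong[OF refl])
  have Eu: "E = (E \<inter> A) \<union> (E \<inter> B)" using sub by auto
  have fE: "f ` E = f ` (E \<inter> A) \<union> f ` (E \<inter> B)" by (subst Eu) (rule image_Un)
  have m1: "f ` (E \<inter> A) \<in> sets lebesgue" unfolding i1 by (rule lebesgue_sets_translation[OF EA])
  have m2: "f ` (E \<inter> B) \<in> sets lebesgue" unfolding i2 by (rule lebesgue_sets_translation[OF EB])
  have d: "f ` (E \<inter> A) \<inter> f ` (E \<inter> B) = {}"
    using inj_on_image_Int[OF inj, of "E \<inter> A" "E \<inter> B"] dis by auto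
  have "emeasure lebesgue (f ` E) = emeasure lebesgue (f ` (E \<inter> A)) + emeasure lebesgue (f ` (E \<inter> B))"
    unfolding fE using plus_emeasure[OF m1 m2 d] by simp
  also have "\<dots> = emeasure lebesgue (E \<inter> A) + emeasure lebesgue (E \<inter> B)"
    unfolding i1 i2 emeasure_transl ..
  also have "\<dots> = emeasure lebesgue E"
    using plus_emeasure[OF EA EB] dis Eu by auto
  finally show ?thesis using fE m1 m2 by auto
qed

lemma rr_sets: assumes "0 < a"
  shows "{t. rr a s t < \<beta>} \<in> sets lebesgue" "{t. \<beta> \<le> rr a s t} \<in> sets lebesgue"
proof -
  have "{t. rr a s t < \<beta>} \<in> sets borel" "{t. \<beta> \<le> rr a s t} \<in> sets borel"
    unfolding rr_def by measurable
  thus "{t. rr a s t < \<beta>} \<in> sets lebesgue" "{t. \<beta> \<le> rr a s t} \<in> sets lebesgue" by auto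
qed


lemma int_between: fixes b :: real assumes "0 < b" "b * of_int n < b * of_int l" "b * of_int l < b * of_int n + b"
  shows False
proof -
  have "of_int n < (of_int l :: real)" using assms(1,2) mult_less_cancel_left_pos by blast
  then have 1: "n < l" by simp
  have "b * of_int l < b * of_int (n + 1)" using assms(3) by (simp add: algebra_simps)
  then have "of_int l < (of_int (n+1) :: real)" using assms(1) mult_less_cancel_left_pos by blast
  then have "l < n + 1" by linarith
  with 1 show False by simp
qed

definition Pm :: "real \<Rightarrow> real \<Rightarrow> real \<Rightarrow> real \<Rightarrow> real set" where
  "Pm a b c m = {t. \<exists>x\<in>Bvec0. \<forall>j. Mact a b c t x j = m}"

lemma Pm_shift: assumes "x \<in> Bvec0" "\<forall>j. Mact a b c t x j = m" "x k = 1"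
  shows "t + of_int k * b \<in> Pm a b c m"
proof -
  have "(\<lambda>l. x (l + k)) \<in> Bvec0" using assms unfolding Bvec0_def Bvec_def by auto
  moreover have "\<forall>j. Mact a b c (t + of_int k * b) (\<lambda>l. x (l + k)) j = m"
    using assms(2) Mact_shift by simp
  ultimately show ?thesis unfolding Pm_def by blast
qed

locale P38 =
  fixes a b c :: real
  assumes a0: "0 < a" and ab: "a < b" and bc: "b < c"
    and c0l: "b - a < c0 b c" and c0u: "c0 b c < a"
begin

abbreviation "nn \<equiv> \<lfloor>c / b\<rfloor>"
abbreviation "cz \<equiv> c0 b c"

lemma b0: "0 < b" using a0 ab by simp
lemma cdec: "c = b * of_int nn + cz" unfolding c0_def by simp
lemma cdec': "c = of_int nn * b + cz" unfolding c0_def by simp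

lemma keyA0:
  assumes x: "x \<in> Bvec0" and M: "\<forall>j. Mact a b c t x j = m"
  shows "Fs b x (c - rr a 0 t) (c - rr a 0 t + a) = 1"
proof -
  define k where "k = \<lfloor>t / a\<rfloor>"
  define t' where "t' = rr a 0 t"
  have t: "t = t' + a * of_int k" unfolding t'_def k_def rr_def by simp
  have r: "0 \<le> t'" "t' < a" using rr_range[OF a0, of 0 t] unfolding t'_def by auto
  have x0: "x 0 = 1" using x unfolding Bvec0_def by simp
  have e0: "a * of_int k - t = - t'" using t by simp
  have e1: "a * of_int (k+1) - t = a - t'" using t by (simp add: algebra_simps)
  have M0: "Fs b x (- t') (- t' + c) = m"
    using M[rule_format, of k] by (simp only: Mact_Fs[OF b0] e0)
  have M1: "Fs b x (a - t') (a - t' + c) = m"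
    using M[rule_format, of "k+1"] by (simp only: Mact_Fs[OF b0] e1)
  have s1: "Fs b x (- t') (- t' + c) = Fs b x (- t') (a - t') + Fs b x (a - t') (- t' + c)"
    using bc ab a0 by (intro Fs_split[OF b0]) auto
  have s2: "Fs b x (- t') (a - t') = 1"
    using Fs_single[OF b0, of "a - t'" "- t'" 0 x] r ab x0 by simp
  have s3: "Fs b x (a - t') (a - t' + c) = Fs b x (a - t') (- t' + c) + Fs b x (- t' + c) (a - t' + c)"
    using bc ab a0 by (intro Fs_split[OF b0]) auto
  have "Fs b x (- t' + c) (a - t' + c) = 1" using M0 M1 s1 s2 s3 by linarith
  moreover have "- t' + c = c - t'" "a - t' + c = c - t' + a" by simp_all
  ultimately show ?thesis unfolding t'_def by simp
qed

lemma keyA: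
  assumes x: "x \<in> Bvec0" and M: "\<forall>j. Mact a b c t x j = m"
  shows keyA1: "rr a 0 t < cz + a - b \<Longrightarrow> x (nn + 1) = 1"
    and keyA2: "cz + a - b \<le> rr a 0 t \<Longrightarrow> rr a 0 t < cz \<Longrightarrow> False"
    and keyA3: "cz \<le> rr a 0 t \<Longrightarrow> x nn = 1"
proof -
  let ?t = "rr a 0 t"
  have F: "Fs b x (c - ?t) (c - ?t + a) = 1" by (rule keyA0[OF x M])
  have r: "0 \<le> ?t" "?t < a" using rr_range[OF a0, of 0 t] by auto
  have bn: "b * of_int (nn + 1) = b * of_int nn + b" by (simp add: algebra_simps)
  show "x (nn + 1) = 1" if "?t < cz + a - b"
  proof -
    have "Fs b x (c - ?t) (c - ?t + a) = x (nn + 1)"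
      apply (rule Fs_single[OF b0])
      using that r ab c0u cdec bn by linarith+
    thus ?thesis using F by simp
  qed
  show False if "cz + a - b \<le> ?t" "?t < cz"
  proof -
    have "Fs b x (c - ?t) (c - ?t + a) = 0"
    proof (rule Fs_empty)
      fix l show "\<not> (c - ?t \<le> b * of_int l \<and> b * of_int l < c - ?t + a)"
      proof
        assume h: "c - ?t \<le> b * of_int l \<and> b * of_int l < c - ?t + a"
        show False
          apply (rule int_between[OF b0, of nn l])
          using h that cdec by linarith+
      qed
    qed
    thus False using F by simp
  qed
  show "x nn = 1" if "cz \<le> ?t"
  proof -
    have "Fs b x (c - ?t) (c - ?t + a) = x nn"
      apply (rule Fs_single[OF b0])
      using that r ab c0u c0l cdec by linarith+
    thus ?thesis using F by simp
  qed
qed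

lemma keyB0:
  assumes x: "x \<in> Bvec0" and M: "\<forall>j. Mact a b c t x j = m"
  shows "Fs b x (- a - rr a (c - a) t) (- rr a (c - a) t) = 1"
proof -
  define k where "k = \<lfloor>(t - (c - a)) / a\<rfloor>"
  define t' where "t' = rr a (c - a) t"
  have t: "t = t' + a * of_int k" unfolding t'_def k_def rr_def by simp
  have r: "c - a \<le> t'" "t' < c" using rr_range[OF a0, of "c - a" t] unfolding t'_def by auto
  have x0: "x 0 = 1" using x unfolding Bvec0_def by simp
  have e0: "a * of_int k - t = - t'" using t by simp
  have e1: "a * of_int (k - 1) - t = - a - t'" using t by (simp add: algebra_simps)
  have M0: "Fs b x (- t') (- t' + c) = m"
    using M[rule_format, of k] by (simp only: Mact_Fs[OF b0] e0)
  have M1: "Fs b x (- a - t') (- a - t' + c) = m"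
    using M[rule_format, of "k - 1"] by (simp only: Mact_Fs[OF b0] e1)
  have s1: "Fs b x (- t') (- t' + c) = Fs b x (- t') (- a - t' + c) + Fs b x (- a - t' + c) (- t' + c)"
    using bc ab a0 by (intro Fs_split[OF b0]) auto
  have s2: "Fs b x (- a - t' + c) (- t' + c) = 1"
    using Fs_single[OF b0, of "- t' + c" "- a - t' + c" 0 x] r ab x0 by simp
  have s3: "Fs b x (- a - t') (- a - t' + c) = Fs b x (- a - t') (- t') + Fs b x (- t') (- a - t' + c)"
    using bc ab a0 by (intro Fs_split[OF b0]) auto
  have "Fs b x (- a - t') (- t') = 1" using M0 M1 s1 s2 s3 by linarith
  thus ?thesis unfolding t'_def by simp
qed

lemma keyB:
  assumes x: "x \<in> Bvec0" and M: "\<forall>j. Mact a b c t x j = m"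
  shows keyB1: "rr a (c - a) t < c - cz \<Longrightarrow> x (- nn) = 1"
    and keyB2: "c - cz \<le> rr a (c - a) t \<Longrightarrow> rr a (c - a) t < c - cz + b - a \<Longrightarrow> False"
    and keyB3: "c - cz + b - a \<le> rr a (c - a) t \<Longrightarrow> x (- nn - 1) = 1"
proof -
  let ?t = "rr a (c - a) t"
  have F: "Fs b x (- a - ?t) (- ?t) = 1" by (rule keyB0[OF x M])
  have r: "c - a \<le> ?t" "?t < c" using rr_range[OF a0, of "c - a" t] by auto
  have bn: "b * of_int (- nn - 1) = - (b * of_int nn) - b" by (simp add: algebra_simps)
  have bn2: "b * of_int (- nn) = - (b * of_int nn)" by simp
  show "x (- nn) = 1" if "?t < c - cz"
  proof -
    have "Fs b x (- a - ?t) (- ?t) = x (- nn)"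
      apply (rule Fs_single[OF b0])
      using that r ab c0u c0l cdec bn2 by linarith+
    thus ?thesis using F by simp
  qed
  show False if "c - cz \<le> ?t" "?t < c - cz + b - a"
  proof -
    have "Fs b x (- a - ?t) (- ?t) = 0"
    proof (rule Fs_empty)
      fix l show "\<not> (- a - ?t \<le> b * of_int l \<and> b * of_int l < - ?t)"
      proof
        assume h: "- a - ?t \<le> b * of_int l \<and> b * of_int l < - ?t"
        show False
          apply (rule int_between[OF b0, of "- nn - 1" l])
          using h that cdec bn by linarith+
      qed
    qed
    thus False using F by simp
  qed
  show "x (- nn - 1) = 1" if "c - cz + b - a \<le> ?t"
  proof -
    have "Fs b x (- a - ?t) (- ?t) = x (- nn - 1)"
      apply (rule Fs_single[OF b0])
      using that r ab c0u cdec bn by linarith+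
    thus ?thesis using F by simp
  qed
qed


lemma cz0: "0 < cz" using c0l ab by linarith

lemma P1: "t \<in> per a {0..<cz + a - b} \<longleftrightarrow> 0 \<le> rr a 0 t \<and> rr a 0 t < cz + a - b"
  using ab c0u by (intro per_iff[OF a0]) auto
lemma P2: "t \<in> per a {cz + a - b..<cz} \<longleftrightarrow> cz + a - b \<le> rr a 0 t \<and> rr a 0 t < cz"
  using ab c0u c0l by (intro per_iff[OF a0]) auto
lemma Q1: "t \<in> per a {c - a..<c - cz} \<longleftrightarrow> c - a \<le> rr a (c - a) t \<and> rr a (c - a) t < c - cz"
  using ab c0u cz0 by (intro per_iff[OF a0]) auto
lemma Q2: "t \<in> per a {c - cz..<c - cz + b - a} \<longleftrightarrow> c - cz \<le> rr a (c - a) t \<and> rr a (c - a) t < c - cz + b - a"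
  using ab c0u c0l by (intro per_iff[OF a0]) auto

lemma Rm1: "rr a 0 t < cz + a - b \<Longrightarrow> Rmap a b c t = t + of_int nn * b + b"
  unfolding Rmap_def using P1 rr_range[OF a0, of 0 t] by simp
lemma Rm2: "cz + a - b \<le> rr a 0 t \<Longrightarrow> rr a 0 t < cz \<Longrightarrow> Rmap a b c t = t"
  unfolding Rmap_def using P1 P2 by simp
lemma Rm3: "cz \<le> rr a 0 t \<Longrightarrow> Rmap a b c t = t + of_int nn * b"
  unfolding Rmap_def using P1 P2 ab by auto

lemma Rt1: "rr a (c - a) t < c - cz \<Longrightarrow> Rtmap a b c t = t - of_int nn * b"
  unfolding Rtmap_def using Q1 rr_range[OF a0, of "c - a" t] by simp
lemma Rt2: "c - cz \<le> rr a (c - a) t \<Longrightarrow> rr a (c - a) t < c - cz + b - a \<Longrightarrow> Rtmap a b c t = t"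
  unfolding Rtmap_def using Q1 Q2 by simp
lemma Rt3: "c - cz + b - a \<le> rr a (c - a) t \<Longrightarrow> Rtmap a b c t = t - of_int nn * b - b"
  unfolding Rtmap_def using Q1 Q2 ab by auto

lemma R_in: assumes "t \<in> Pm a b c m" shows "Rmap a b c t \<in> Pm a b c m"
proof -
  obtain x where x: "x \<in> Bvec0" and M: "\<forall>j. Mact a b c t x j = m" using assms unfolding Pm_def by blast
  consider "rr a 0 t < cz + a - b" | "cz + a - b \<le> rr a 0 t" "rr a 0 t < cz" | "cz \<le> rr a 0 t" by linarith
  then show ?thesis
  proof cases
    case 1
    have "t + of_int (nn + 1) * b \<in> Pm a b c m" by (rule Pm_shift[OF x M keyA1[OF x M 1]])
    thus ?thesis using Rm1[OF 1] by (simp add: algebra_simps)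
  next
    case 2 then show ?thesis using keyA2[OF x M] by blast
  next
    case 3
    have "t + of_int nn * b \<in> Pm a b c m" by (rule Pm_shift[OF x M keyA3[OF x M 3]])
    thus ?thesis using Rm3[OF 3] by simp
  qed
qed

lemma Rt_in: assumes "t \<in> Pm a b c m" shows "Rtmap a b c t \<in> Pm a b c m"
proof -
  obtain x where x: "x \<in> Bvec0" and M: "\<forall>j. Mact a b c t x j = m" using assms unfolding Pm_def by blast
  consider "rr a (c - a) t < c - cz" | "c - cz \<le> rr a (c - a) t" "rr a (c - a) t < c - cz + b - a"
    | "c - cz + b - a \<le> rr a (c - a) t" by linarith
  then show ?thesis
  proof cases
    case 1
    have "t + of_int (- nn) * b \<in> Pm a b c m" by (rule Pm_shift[OF x M keyB1[OF x M 1]])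
    thus ?thesis using Rt1[OF 1] by simp
  next
    case 2 then show ?thesis using keyB2[OF x M] by blast
  next
    case 3
    have "t + of_int (- nn - 1) * b \<in> Pm a b c m" by (rule Pm_shift[OF x M keyB3[OF x M 3]])
    moreover have "Rtmap a b c t = t + of_int (- nn - 1) * b" using Rt3[OF 3] by (simp add: algebra_simps)
    ultimately show ?thesis by simp
  qed
qed

lemma Pm_mid: assumes "t \<in> Pm a b c m"
  shows "\<not> (cz + a - b \<le> rr a 0 t \<and> rr a 0 t < cz)"
    and "\<not> (c - cz \<le> rr a (c - a) t \<and> rr a (c - a) t < c - cz + b - a)"
proof -
  obtain x where x: "x \<in> Bvec0" and M: "\<forall>j. Mact a b c t x j = m" using assms unfolding Pm_def by blast
  show "\<not> (cz + a - b \<le> rr a 0 t \<and> rr a 0 t < cz)" using keyA2[OF x M] by blast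
  show "\<not> (c - cz \<le> rr a (c - a) t \<and> rr a (c - a) t < c - cz + b - a)" using keyB2[OF x M] by blast
qed

lemma RtR: assumes "t \<in> Pm a b c m" shows "Rtmap a b c (Rmap a b c t) = t"
proof -
  define k where "k = \<lfloor>t / a\<rfloor>"
  define t' where "t' = rr a 0 t"
  have t: "t = t' + a * of_int k" unfolding t'_def k_def rr_def by simp
  have r: "0 \<le> t'" "t' < a" using rr_range[OF a0, of 0 t] unfolding t'_def by auto
  consider "t' < cz + a - b" | "cz \<le> t'" using Pm_mid(1)[OF assms] unfolding t'_def by linarith
  then show ?thesis
  proof cases
    case 1
    define v where "v = t' + of_int nn * b + b - a"
    have R0: "Rmap a b c t = t + of_int nn * b + b" using Rm1 1 unfolding t'_def by simp
    have u: "Rmap a b c t = v + a * of_int (k + 1)"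
      unfolding R0 v_def using t by (simp add: algebra_simps)
    have rv: "rr a (c - a) (Rmap a b c t) = v"
      unfolding u using 1 r cdec c0u ab unfolding v_def by (intro rr_eq[OF a0]) (auto simp: algebra_simps)
    have "c - cz + b - a \<le> v" using r cdec' unfolding v_def by linarith
    then show ?thesis using Rt3[of "Rmap a b c t"] rv Rm1 1 unfolding t'_def by simp
  next
    case 2
    define v where "v = t' + of_int nn * b - a"
    have R0: "Rmap a b c t = t + of_int nn * b" using Rm3 2 unfolding t'_def by simp
    have u: "Rmap a b c t = v + a * of_int (k + 1)"
      unfolding R0 v_def using t by (simp add: algebra_simps)
    have rv: "rr a (c - a) (Rmap a b c t) = v"
      unfolding u using 2 r cdec c0u ab cz0 unfolding v_def by (intro rr_eq[OF a0]) (auto simp: algebra_simps)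
    have "v < c - cz" using r cdec' c0u ab unfolding v_def by linarith
    then show ?thesis using Rt1[of "Rmap a b c t"] rv Rm3 2 unfolding t'_def by simp
  qed
qed

lemma RRt: assumes "t \<in> Pm a b c m" shows "Rmap a b c (Rtmap a b c t) = t"
proof -
  define k where "k = \<lfloor>(t - (c - a)) / a\<rfloor>"
  define t' where "t' = rr a (c - a) t"
  have t: "t = t' + a * of_int k" unfolding t'_def k_def rr_def by simp
  have r: "c - a \<le> t'" "t' < c" using rr_range[OF a0, of "c - a" t] unfolding t'_def by auto
  consider "t' < c - cz" | "c - cz + b - a \<le> t'" using Pm_mid(2)[OF assms] unfolding t'_def by linarith
  then show ?thesis
  proof cases
    case 1
    define v where "v = t' - of_int nn * b + a"
    have R0: "Rtmap a b c t = t - of_int nn * b" using Rt1 1 unfolding t'_def by simp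
    have u: "Rtmap a b c t = v + a * of_int (k - 1)"
      unfolding R0 v_def using t by (simp add: algebra_simps)
    have rv: "rr a 0 (Rtmap a b c t) = v"
      unfolding u using 1 r cdec c0u ab cz0 unfolding v_def by (intro rr_eq[OF a0]) (auto simp: algebra_simps)
    have "cz \<le> v" using r cdec' unfolding v_def by linarith
    then show ?thesis using Rm3[of "Rtmap a b c t"] rv Rt1 1 unfolding t'_def by simp
  next
    case 2
    define v where "v = t' - of_int nn * b - b + a"
    have R0: "Rtmap a b c t = t - of_int nn * b - b" using Rt3 2 unfolding t'_def by simp
    have u: "Rtmap a b c t = v + a * of_int (k - 1)"
      unfolding R0 v_def using t by (simp add: algebra_simps)
    have rv: "rr a 0 (Rtmap a b c t) = v"
      unfolding u using 2 r cdec c0u c0l ab unfolding v_def by (intro rr_eq[OF a0]) (auto simp: algebra_simps)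
    have "v < cz + a - b" using r cdec' c0u ab unfolding v_def by linarith
    then show ?thesis using Rm1[of "Rtmap a b c t"] rv Rt3 2 unfolding t'_def by simp
  qed
qed

lemma images: "Rmap a b c ` Pm a b c m = Pm a b c m" "Rtmap a b c ` Pm a b c m = Pm a b c m"
proof -
  show "Rmap a b c ` Pm a b c m = Pm a b c m"
  proof
    show "Rmap a b c ` Pm a b c m \<subseteq> Pm a b c m" using R_in by blast
    show "Pm a b c m \<subseteq> Rmap a b c ` Pm a b c m"
    proof
      fix t assume t: "t \<in> Pm a b c m"
      then have "t = Rmap a b c (Rtmap a b c t)" using RRt by simp
      thus "t \<in> Rmap a b c ` Pm a b c m" using Rt_in[OF t] by blast
    qed
  qed
  show "Rtmap a b c ` Pm a b c m = Pm a b c m"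
  proof
    show "Rtmap a b c ` Pm a b c m \<subseteq> Pm a b c m" using Rt_in by blast
    show "Pm a b c m \<subseteq> Rtmap a b c ` Pm a b c m"
    proof
      fix t assume t: "t \<in> Pm a b c m"
      then have "t = Rtmap a b c (Rmap a b c t)" using RtR by simp
      thus "t \<in> Rtmap a b c ` Pm a b c m" using R_in[OF t] by blast
    qed
  qed
qed

lemma meas: assumes E: "E \<in> sets lebesgue" "E \<subseteq> Pm a b c m"
  shows "Rmap a b c ` E \<in> sets lebesgue \<and> Rtmap a b c ` E \<in> sets lebesgue \<and>
           emeasure lebesgue (Rmap a b c ` E) = emeasure lebesgue E \<and>
           emeasure lebesgue (Rtmap a b c ` E) = emeasure lebesgue E"
proof -
  have injR: "inj_on (Rmap a b c) E" by (rule inj_on_inverseI[of _ "Rtmap a b c"]) (use RtR E in blast)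
  have injRt: "inj_on (Rtmap a b c) E" by (rule inj_on_inverseI[of _ "Rmap a b c"]) (use RRt E in blast)
  have 1: "Rmap a b c ` E \<in> sets lebesgue \<and> emeasure lebesgue (Rmap a b c ` E) = emeasure lebesgue E"
  proof (rule trans_pieces[OF E(1) rr_sets(1)[OF a0, of 0 "cz + a - b"] rr_sets(2)[OF a0, of "cz" 0] _ _ _ _ injR,
        where p = "of_int nn * b + b" and q = "of_int nn * b"])
    show "E \<subseteq> {t. rr a 0 t < cz + a - b} \<union> {t. cz \<le> rr a 0 t}"
      using Pm_mid(1) E(2) by force
    show "{t. rr a 0 t < cz + a - b} \<inter> {t. cz \<le> rr a 0 t} = {}" using ab by auto
  qed (auto simp: Rm1 Rm3 algebra_simps)
  have 2: "Rtmap a b c ` E \<in> sets lebesgue \<and> emeasure lebesgue (Rtmap a b c ` E) = emeasure lebesgue E"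
  proof (rule trans_pieces[OF E(1) rr_sets(1)[OF a0, of "c - a" "c - cz"] rr_sets(2)[OF a0, of "c - cz + b - a" "c - a"] _ _ _ _ injRt,
        where p = "- (of_int nn * b)" and q = "- (of_int nn * b) - b"])
    show "E \<subseteq> {t. rr a (c - a) t < c - cz} \<union> {t. c - cz + b - a \<le> rr a (c - a) t}"
      using Pm_mid(2) E(2) by force
    show "{t. rr a (c - a) t < c - cz} \<inter> {t. c - cz + b - a \<le> rr a (c - a) t} = {}" using ab by auto
  qed (auto simp: Rt1 Rt3 algebra_simps)
  show ?thesis using 1 2 by blast
qed

end

theorem proposition3p8:
  fixes a b c :: real
  assumes "0 < a" and "a < b" and "b < c"
    and "b - a < c0 b c" and "c0 b c < a"
  shows "Rmap a b c ` Dset a b c = Dset a b c \<and> Rtmap a b c ` Dset a b c = Dset a b c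
    \<and> Rmap a b c ` Sset a b c = Sset a b c \<and> Rtmap a b c ` Sset a b c = Sset a b c
    \<and> (\<forall>t\<in>Sset a b c. Rmap a b c (Rtmap a b c t) = t \<and> Rtmap a b c (Rmap a b c t) = t)
    \<and> (\<forall>t\<in>Dset a b c. Rmap a b c (Rtmap a b c t) = t \<and> Rtmap a b c (Rmap a b c t) = t)
    \<and> (\<forall>E. E \<in> sets lebesgue \<and> E \<subseteq> Sset a b c \<longrightarrow>
           Rmap a b c ` E \<in> sets lebesgue \<and> Rtmap a b c ` E \<in> sets lebesgue \<and>
           emeasure lebesgue (Rmap a b c ` E) = emeasure lebesgue E \<and>
           emeasure lebesgue (Rtmap a b c ` E) = emeasure lebesgue E)
    \<and> (\<forall>E. E \<in> sets lebesgue \<and> E \<subseteq> Dset a b c \<longrightarrow>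
           Rmap a b c ` E \<in> sets lebesgue \<and> Rtmap a b c ` E \<in> sets lebesgue \<and>
           emeasure lebesgue (Rmap a b c ` E) = emeasure lebesgue E \<and>
           emeasure lebesgue (Rtmap a b c ` E) = emeasure lebesgue E)"
proof -
  interpret P38 a b c using assms by unfold_locales
  have D: "Dset a b c = Pm a b c 2" unfolding Dset_def Pm_def ..
  have S: "Sset a b c = Pm a b c 1" unfolding Sset_def Pm_def ..
  have i2: "Rmap a b c ` Pm a b c 2 = Pm a b c 2" "Rtmap a b c ` Pm a b c 2 = Pm a b c 2" by (rule images)+
  have i1: "Rmap a b c ` Pm a b c 1 = Pm a b c 1" "Rtmap a b c ` Pm a b c 1 = Pm a b c 1" by (rule images)+
  have v1: "\<forall>t\<in>Pm a b c 1. Rmap a b c (Rtmap a b c t) = t \<and> Rtmap a b c (Rmap a b c t) = t"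
    using RtR RRt by blast
  have v2: "\<forall>t\<in>Pm a b c 2. Rmap a b c (Rtmap a b c t) = t \<and> Rtmap a b c (Rmap a b c t) = t"
    using RtR RRt by blast
  have m1: "\<forall>E. E \<in> sets lebesgue \<and> E \<subseteq> Pm a b c 1 \<longrightarrow>
           Rmap a b c ` E \<in> sets lebesgue \<and> Rtmap a b c ` E \<in> sets lebesgue \<and>
           emeasure lebesgue (Rmap a b c ` E) = emeasure lebesgue E \<and>
           emeasure lebesgue (Rtmap a b c ` E) = emeasure lebesgue E"
    using meas by blast
  have m2: "\<forall>E. E \<in> sets lebesgue \<and> E \<subseteq> Pm a b c 2 \<longrightarrow>
           Rmap a b c ` E \<in> sets lebesgue \<and> Rtmap a b c ` E \<in> sets lebesgue \<and>
           emeasure lebesgue (Rmap a b c ` E) = emeasure lebesgue E \<and>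
           emeasure lebesgue (Rtmap a b c ` E) = emeasure lebesgue E"
    using meas by blast
  show ?thesis unfolding D S using i1 i2 v1 v2 m1 m2 by (intro conjI)
qed

end
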